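(* Let $Q$ be a $\Sigma$-uniformized query with hypergraph $\mathcal{H}=(V,E)$, input size $n$, $p$ machines, let $\Delta>0$, and let $\psi$ be the vector returned by Construct$(Q,\Delta)$. Then for every $R\in Q$ with $\mathrm{vars}(R)\setminus H[\mathbf{V}(\psi)/\Delta]\neq\emptyset$, there exists a relation $R'\in Q$ such that (i) $\mathrm{vars}(R)\setminus H[\mathbf{V}(\psi)/\Delta]\subseteq\mathrm{vars}(R')$ and (ii) $\sum_{x\in\mathrm{vars}(R')}\mathbf{V}_x(\psi)\ge 1$.
   Context: A natural join query $Q$ is a set of relations (distinct schemas) with hypergraph $\mathcal{H}=(V,E)$, $V=\bigcup_R\mathrm{vars}(R)$, $E=\{\mathrm{vars}(R)\}$. $\mathcal{H}[S]$ has vertex set $S$ and edges $\{S\cap e: e\in E, S\cap e\ne\emptyset\}$; $\mathsf{red}$ removes every edge strictly contained in another; $\tau^*$ is the minimum fractional vertex cover value. $\deg_R(Y\mid X)=\max_{\mathbf{x}}|\pi_Y\sigma_{X=\mathbf{x}}R|$. A constraint set for $R$ is $\sigma_R:\mathcal{P}(\mathrm{vars}(R))\to\mathbb{R}_{\ge0}$; $R$ satisfies it if $\deg_R(Y\mid X)\le2\sigma_R(X)/\sigma_R(Y)$ for all $X\subseteq Y\subseteq\mathrm{vars}(R)$; $Q$ is $\Sigma$-uniformized ($\Sigma=\{\sigma_R\}_{R\in Q}$) if each $R$ satisfies $\sigma_R$. A vertex weight mapping is $\mathbf{v}:V\to\mathbb{R}_{\ge0}$. For $R\in Q$ and $U\subseteq\mathrm{vars}(R)$: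 $U$ is heavy in $R$ if $\sigma_R(U)\ge n/p^{\sum_{i\in U}v_i}$, consistent if $\sigma_R(U)\le n/p^{\sum_{i\in U}v_i}$. $\mathbf{v}$ is consistent with $Q$ if every $U\subseteq\mathrm{vars}(R)$ is consistent in $R$ for every $R\in Q$. $H[\mathbf{v}]$ is the union of all sets $U$ heavy in some $R\in Q$. For each $U\subseteq V$ fix a minimum fractional vertex cover $\mathbf{v}^*_U$ of $\mathsf{red}(\mathcal{H}[U])$ (zero outside $U$). For $\psi=(\psi_U)_{U\in\mathcal{P}(V)}$, $\mathbf{V}(\psi)=\sum_U\psi_U\mathbf{v}^*_U$ and $|\psi|_1=\sum_U\psi_U$. Construct$(Q,\Delta)$: set $\psi\gets\mathbf{0}$; while $|\psi|_1<1$ and $H[\mathbf{V}(\psi)/\Delta]\ne V$: let $L=V\setminus H[\mathbf{V}(\psi)/\Delta]$ and set $\psi_L$ to the largest $\delta\in(0,1-|\psi|_1]$ such that $Q$ is consistent with $(\mathbf{V}(\psi)+\delta\mathbf{v}^*_L)/\Delta$; return $\psi$. *)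

theory Defs
  imports Complex_Main
begin

text \<open>A join query is a finite set Q of relation names of type 'r; vars R is the schema of R,
  tuples R the set of tuples of R (partial maps with domain vars R), sigma R its constraint set.\<close>

definition hypV :: "'r set \<Rightarrow> ('r \<Rightarrow> 'v set) \<Rightarrow> 'v set" where
  "hypV Q vars = \<Union> (vars ` Q)"

definition ind_edges :: "'r set \<Rightarrow> ('r \<Rightarrow> 'v set) \<Rightarrow> 'v set \<Rightarrow> 'v set set" where
  "ind_edges Q vars S = {S \<inter> vars R | R. R \<in> Q \<and> S \<inter> vars R \<noteq> {}}"

definition red :: "'v set set \<Rightarrow> 'v set set" where
  "red F = {e \<in> F. \<not> (\<exists>f\<in>F. e \<subset> f)}"

definition frac_vc :: "'v set \<Rightarrow> 'v set set \<Rightarrow> ('v \<Rightarrow> real) \<Rightarrow> bool" where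
  "frac_vc S F v \<longleftrightarrow> (\<forall>x\<in>S. v x \<ge> 0) \<and> (\<forall>f\<in>F. (\<Sum>x\<in>f. v x) \<ge> 1)"

definition min_frac_vc :: "'v set \<Rightarrow> 'v set set \<Rightarrow> ('v \<Rightarrow> real) \<Rightarrow> bool" where
  "min_frac_vc S F v \<longleftrightarrow> frac_vc S F v \<and>
     (\<forall>w. frac_vc S F w \<longrightarrow> (\<Sum>x\<in>S. v x) \<le> (\<Sum>x\<in>S. w x))"

definition deg :: "('v \<rightharpoonup> 'd) set \<Rightarrow> 'v set \<Rightarrow> 'v set \<Rightarrow> nat" where
  "deg T X Y = Max (insert 0 ((\<lambda>x. card {t |` Y | t. t \<in> T \<and> t |` X = x}) ` ((\<lambda>t. t |` X) ` T)))"

definition satisfies :: "('v \<rightharpoonup> 'd) set \<Rightarrow> 'v set \<Rightarrow> ('v set \<Rightarrow> real) \<Rightarrow> bool" where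
  "satisfies T S sg \<longleftrightarrow> (\<forall>X Y. X \<subseteq> Y \<and> Y \<subseteq> S \<and> sg Y > 0 \<longrightarrow>
      real (deg T X Y) \<le> 2 * sg X / sg Y)"

definition uniformized :: "'r set \<Rightarrow> ('r \<Rightarrow> 'v set) \<Rightarrow> ('r \<Rightarrow> ('v \<rightharpoonup> 'd) set)
    \<Rightarrow> ('r \<Rightarrow> 'v set \<Rightarrow> real) \<Rightarrow> bool" where
  "uniformized Q vars tuples sigma \<longleftrightarrow> (\<forall>R\<in>Q. satisfies (tuples R) (vars R) (sigma R))"

definition heavy :: "('r \<Rightarrow> 'v set \<Rightarrow> real) \<Rightarrow> nat \<Rightarrow> nat \<Rightarrow> ('v \<Rightarrow> real) \<Rightarrow> 'r \<Rightarrow> 'v set \<Rightarrow> bool" where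
  "heavy sigma n p v R U \<longleftrightarrow> sigma R U \<ge> real n / (real p powr (\<Sum>i\<in>U. v i))"

definition consistent_in :: "('r \<Rightarrow> 'v set \<Rightarrow> real) \<Rightarrow> nat \<Rightarrow> nat \<Rightarrow> ('v \<Rightarrow> real) \<Rightarrow> 'r \<Rightarrow> 'v set \<Rightarrow> bool" where
  "consistent_in sigma n p v R U \<longleftrightarrow> sigma R U \<le> real n / (real p powr (\<Sum>i\<in>U. v i))"

definition consistent :: "'r set \<Rightarrow> ('r \<Rightarrow> 'v set) \<Rightarrow> ('r \<Rightarrow> 'v set \<Rightarrow> real) \<Rightarrow> nat \<Rightarrow> nat
    \<Rightarrow> ('v \<Rightarrow> real) \<Rightarrow> bool" where
  "consistent Q vars sigma n p v \<longleftrightarrow> (\<forall>R\<in>Q. \<forall>U. U \<subseteq> vars R \<longrightarrow> consistent_in sigma n p v R U)"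

definition Hset :: "'r set \<Rightarrow> ('r \<Rightarrow> 'v set) \<Rightarrow> ('r \<Rightarrow> 'v set \<Rightarrow> real) \<Rightarrow> nat \<Rightarrow> nat
    \<Rightarrow> ('v \<Rightarrow> real) \<Rightarrow> 'v set" where
  "Hset Q vars sigma n p v = \<Union> {U. \<exists>R\<in>Q. U \<subseteq> vars R \<and> heavy sigma n p v R U}"

definition Vpsi :: "'v set \<Rightarrow> ('v set \<Rightarrow> 'v \<Rightarrow> real) \<Rightarrow> ('v set \<Rightarrow> real) \<Rightarrow> 'v \<Rightarrow> real" where
  "Vpsi V vstar psi = (\<lambda>x. \<Sum>U\<in>Pow V. psi U * vstar U x)"

definition norm1 :: "'v set \<Rightarrow> ('v set \<Rightarrow> real) \<Rightarrow> real" where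
  "norm1 V psi = (\<Sum>U\<in>Pow V. psi U)"

definition Hpsi :: "'r set \<Rightarrow> ('r \<Rightarrow> 'v set) \<Rightarrow> ('r \<Rightarrow> 'v set \<Rightarrow> real) \<Rightarrow> nat \<Rightarrow> nat
    \<Rightarrow> ('v set \<Rightarrow> 'v \<Rightarrow> real) \<Rightarrow> real \<Rightarrow> ('v set \<Rightarrow> real) \<Rightarrow> 'v set" where
  "Hpsi Q vars sigma n p vstar Delta psi =
     Hset Q vars sigma n p (\<lambda>x. Vpsi (hypV Q vars) vstar psi x / Delta)"

definition loop_cond where
  "loop_cond Q vars sigma n p vstar Delta psi \<longleftrightarrow>
     norm1 (hypV Q vars) psi < 1 \<and> Hpsi Q vars sigma n p vstar Delta psi \<noteq> hypV Q vars"

text \<open>One iteration of the while loop of Construct: L = V - H, psi_L is set to the largest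
  admissible delta (the step exists only if such a largest delta exists).\<close>
definition construct_step where
  "construct_step Q vars sigma n p vstar Delta psi psi' \<longleftrightarrow>
     loop_cond Q vars sigma n p vstar Delta psi \<and>
     (let V = hypV Q vars;
          L = V - Hpsi Q vars sigma n p vstar Delta psi;
          D = {d. 0 < d \<and> d \<le> 1 - norm1 V psi \<and>
                  consistent Q vars sigma n p (\<lambda>x. (Vpsi V vstar psi x + d * vstar L x) / Delta)}
      in \<exists>\<delta>. \<delta> \<in> D \<and> (\<forall>d\<in>D. d \<le> \<delta>) \<and> psi' = psi(L := \<delta>))"

definition construct_output where
  "construct_output Q vars sigma n p vstar Delta psi \<longleftrightarrow>
     (construct_step Q vars sigma n p vstar Delta)\<^sup>*\<^sup>* (\<lambda>_. 0) psi \<and>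
     \<not> loop_cond Q vars sigma n p vstar Delta psi"

end

theory Submission imports Defs begin

lemma select:
  fixes Q :: "'r set" and vars :: "'r \<Rightarrow> 'v set" and C :: "'v set set"
  assumes fQ: "finite Q" and fV: "finite V" and sub: "\<forall>R\<in>Q. vars R \<subseteq> V"
    and CV: "C \<subseteq> Pow V" and ch: "\<forall>U\<in>C. \<forall>W\<in>C. U \<subseteq> W \<or> W \<subseteq> U"
    and R0: "R0 \<in> Q" "e \<subseteq> vars R0" and eC: "\<forall>U\<in>C. e \<subseteq> U"
  shows "\<exists>R'\<in>Q. e \<subseteq> vars R' \<and> (\<forall>U\<in>C. \<forall>R\<in>Q. \<not> (vars R' \<inter> U \<subset> vars R \<inter> U))"
proof -
  have fC: "finite C" using CV fV by (meson finite_Pow_iff rev_finite_subset)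
  define M :: real where "M = real (card V) + 1"
  define dep where "dep x = card {U\<in>C. x \<in> U}" for x
  define om where "om x = M ^ dep x" for x
  define Wt where "Wt R = (\<Sum>x\<in>vars R. om x)" for R
  have M1: "M \<ge> 1" by (simp add: M_def)
  have om_pos: "om x \<ge> 0" for x using M1 by (simp add: om_def)
  define A where "A = {R\<in>Q. e \<subseteq> vars R}"
  have fA: "finite A" using fQ by (simp add: A_def)
  have A0: "R0 \<in> A" using R0 by (simp add: A_def)
  have "Max (Wt ` A) \<in> Wt ` A" using fA A0 by (intro Max_in) auto
  then obtain R' where R'A: "R' \<in> A" and R'W: "Wt R' = Max (Wt ` A)" by auto
  have R'max: "Wt R \<le> Wt R'" if "R \<in> A" for R
    using that fA R'W by simp
  have finv: "finite (vars X)" if "X \<in> Q" for X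
    using that sub fV rev_finite_subset by blast
  show ?thesis
  proof (intro bexI conjI ballI notI)
    show "e \<subseteq> vars R'" "R' \<in> Q" using R'A by (auto simp: A_def)
    fix U R assume UC: "U \<in> C" and RQ: "R \<in> Q" and strict: "vars R' \<inter> U \<subset> vars R \<inter> U"
    have RA: "R \<in> A" using strict eC UC R'A RQ unfolding A_def by blast
    have R'Q: "R' \<in> Q" using R'A by (simp add: A_def)
    define d where "d = card {W\<in>C. U \<subseteq> W}"
    have d1: "d \<ge> 1"
      proof - have "U \<in> {W\<in>C. U \<subseteq> W}" using UC by auto hence "card {W\<in>C. U \<subseteq> W} > 0" using fC by (subst card_gt_0_iff) auto thus ?thesis by (simp add: d_def) qed
    have inU: "om x \<ge> M^d" if "x \<in> U" for x
    proof -
      have "d \<le> dep x" unfolding d_def dep_def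
        by (rule card_mono) (use fC that in auto)
      thus ?thesis unfolding om_def using M1 by (rule power_increasing)
    qed
    have outU: "om x \<le> M^(d-1)" if "x \<notin> U" for x
    proof -
      have "{W\<in>C. x \<in> W} \<subseteq> {W\<in>C. U \<subseteq> W} - {U}"
        using ch UC that by blast
      hence "dep x \<le> card ({W\<in>C. U \<subseteq> W} - {U})" unfolding dep_def
        by (rule card_mono[rotated]) (use fC in auto)
      also have "\<dots> = d - 1" unfolding d_def using UC by (subst card_Diff_singleton) auto
      finally show ?thesis unfolding om_def using M1 by (intro power_increasing)
    qed
    obtain x0 where x0: "x0 \<in> vars R \<inter> U" "x0 \<notin> vars R' \<inter> U" using strict by blast
    have "Wt R \<ge> (\<Sum>x\<in>vars R \<inter> U. om x)" unfolding Wt_def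
      by (rule sum_mono2) (use finv[OF RQ] om_pos in auto)
    moreover have "(\<Sum>x\<in>vars R \<inter> U. om x) \<ge> (\<Sum>x\<in>insert x0 (vars R' \<inter> U). om x)"
      by (rule sum_mono2) (use finv[OF RQ] om_pos x0 strict in auto)
    moreover have "(\<Sum>x\<in>insert x0 (vars R' \<inter> U). om x) = om x0 + (\<Sum>x\<in>vars R' \<inter> U. om x)"
      using x0 finv[OF R'Q] by (subst sum.insert) auto
    moreover have "Wt R' = (\<Sum>x\<in>vars R' \<inter> U. om x) + (\<Sum>x\<in>vars R' - U. om x)"
      unfolding Wt_def using finv[OF R'Q] by (rule sum.Int_Diff)
    moreover have "(\<Sum>x\<in>vars R' - U. om x) \<le> (\<Sum>x\<in>vars R' - U. M^(d-1))"
      by (rule sum_mono) (use outU in auto)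
    moreover have "(\<Sum>x\<in>vars R' - U. M^(d-1)) = real (card (vars R' - U)) * M^(d-1)" by simp
    moreover have "card (vars R' - U) \<le> card V"
      by (rule card_mono) (use fV sub R'Q in auto)
    moreover have "real (card V) * M^(d-1) < M * M^(d-1)"
      using M1 by (intro mult_strict_right_mono) (auto simp: M_def)
    moreover have "M * M^(d-1) = M^d" using d1
      by (cases d) auto
    moreover have "real (card (vars R' - U)) * M^(d-1) \<le> real (card V) * M^(d-1)"
      using \<open>card (vars R' - U) \<le> card V\<close> M1 by (intro mult_right_mono) auto
    moreover have "om x0 \<ge> M^d" using x0 inU by blast
    moreover note R'max[OF RA]
    ultimately show False by linarith
  qed
qed

context
  fixes Q :: "'r set" and vars :: "'r \<Rightarrow> 'v set" and sigma :: "'r \<Rightarrow> 'v set \<Rightarrow> real"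
    and n p :: nat and Delta :: real and vstar :: "'v set \<Rightarrow> 'v \<Rightarrow> real"
  assumes fQ: "finite Q" and fv: "\<forall>R\<in>Q. finite (vars R)" and p1: "p \<ge> 1" and Dp: "Delta > 0"
    and vs: "\<forall>U. U \<subseteq> hypV Q vars \<longrightarrow>
           min_frac_vc U (red (ind_edges Q vars U)) (vstar U) \<and> (\<forall>x. x \<notin> U \<longrightarrow> vstar U x = 0)"
begin

lemma finV: "finite (hypV Q vars)"
  using fQ fv by (simp add: hypV_def)

lemma vstar_nonneg: "L \<subseteq> hypV Q vars \<Longrightarrow> vstar L x \<ge> 0"
  using vs unfolding min_frac_vc_def frac_vc_def by (cases "x \<in> L") auto

lemma Hset_mono:
  assumes "\<And>x. v x \<le> w x"
  shows "Hset Q vars sigma n p v \<subseteq> Hset Q vars sigma n p w"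
proof -
  have "heavy sigma n p w R U" if "R \<in> Q" "U \<subseteq> vars R" "heavy sigma n p v R U" for R U
  proof -
    have fU: "finite U" using that fv finite_subset by blast
    have s: "(\<Sum>i\<in>U. v i) \<le> (\<Sum>i\<in>U. w i)" by (rule sum_mono) (use assms in auto)
    have pp: "real p > 0" using p1 by simp
    have "real n / real p powr (\<Sum>i\<in>U. w i) \<le> real n / real p powr (\<Sum>i\<in>U. v i)"
      by (rule divide_left_mono) (use powr_mono[OF s] p1 pp in auto)
    thus ?thesis using that(3) unfolding heavy_def by linarith
  qed
  thus ?thesis unfolding Hset_def by blast
qed

lemma Vpsi_upd:
  assumes "psi L = 0" "L \<subseteq> hypV Q vars"
  shows "Vpsi (hypV Q vars) vstar (psi(L:=\<delta>)) x = Vpsi (hypV Q vars) vstar psi x + \<delta> * vstar L x"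
proof -
  have "(\<Sum>U\<in>Pow (hypV Q vars). (psi(L:=\<delta>)) U * vstar U x) =
        (\<Sum>U\<in>Pow (hypV Q vars). psi U * vstar U x + (if U = L then \<delta> * vstar L x else 0))"
    by (rule sum.cong) (use assms in auto)
  also have "\<dots> = (\<Sum>U\<in>Pow (hypV Q vars). psi U * vstar U x) + \<delta> * vstar L x"
    using assms finV by (simp add: sum.distrib)
  finally show ?thesis unfolding Vpsi_def .
qed

lemma norm1_upd:
  assumes "psi L = 0" "L \<subseteq> hypV Q vars"
  shows "norm1 (hypV Q vars) (psi(L:=\<delta>)) = norm1 (hypV Q vars) psi + \<delta>"
proof -
  have "(\<Sum>U\<in>Pow (hypV Q vars). (psi(L:=\<delta>)) U) =
        (\<Sum>U\<in>Pow (hypV Q vars). psi U + (if U = L then \<delta> else 0))"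
    by (rule sum.cong) (use assms in auto)
  also have "\<dots> = (\<Sum>U\<in>Pow (hypV Q vars). psi U) + \<delta>"
    using assms finV by (simp add: sum.distrib)
  finally show ?thesis unfolding norm1_def .
qed

definition Inv :: "('v set \<Rightarrow> real) \<Rightarrow> bool" where
  "Inv psi \<longleftrightarrow>
    (\<forall>U. psi U \<noteq> 0 \<longrightarrow> psi U > 0 \<and> U \<subseteq> hypV Q vars \<and>
        hypV Q vars - Hpsi Q vars sigma n p vstar Delta psi \<subseteq> U) \<and>
    (\<forall>U W. psi U \<noteq> 0 \<longrightarrow> psi W \<noteq> 0 \<longrightarrow> U \<subseteq> W \<or> W \<subseteq> U) \<and>
    (psi (hypV Q vars - Hpsi Q vars sigma n p vstar Delta psi) \<noteq> 0 \<longrightarrow>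
       {d. 0 < d \<and> d \<le> 1 - norm1 (hypV Q vars) psi \<and>
           consistent Q vars sigma n p (\<lambda>x. (Vpsi (hypV Q vars) vstar psi x + d *
              vstar (hypV Q vars - Hpsi Q vars sigma n p vstar Delta psi) x) / Delta)} = {})"

lemma Inv0: "Inv (\<lambda>_. 0)"
  unfolding Inv_def by simp

lemma Inv_step:
  assumes st: "construct_step Q vars sigma n p vstar Delta psi psi'" and I: "Inv psi"
  shows "Inv psi'"
proof -
  define V where "V = hypV Q vars"
  define H where "H = (\<lambda>psi. Hpsi Q vars sigma n p vstar Delta psi)"
  define L where "L = V - H psi"
  define D where "D = (\<lambda>psi L. {d. 0 < d \<and> d \<le> 1 - norm1 V psi \<and>
                  consistent Q vars sigma n p (\<lambda>x. (Vpsi V vstar psi x + d * vstar L x) / Delta)})"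
  from st obtain \<delta> where dD: "\<delta> \<in> D psi L" and dmax: "\<forall>d\<in>D psi L. d \<le> \<delta>" and psi': "psi' = psi(L := \<delta>)"
    unfolding construct_step_def Let_def D_def L_def V_def H_def by blast
  have I1: "\<And>U. psi U \<noteq> 0 \<Longrightarrow> psi U > 0 \<and> U \<subseteq> V \<and> V - H psi \<subseteq> U"
    and I2: "\<And>U W. psi U \<noteq> 0 \<Longrightarrow> psi W \<noteq> 0 \<Longrightarrow> U \<subseteq> W \<or> W \<subseteq> U"
    and I3: "psi L \<noteq> 0 \<Longrightarrow> D psi L = {}"
    using I unfolding Inv_def V_def H_def L_def D_def by blast+
  have psiL: "psi L = 0" using I3 dD by blast
  have LV: "L \<subseteq> V" by (simp add: L_def)
  have dpos: "\<delta> > 0" using dD by (simp add: D_def)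
  have Vup: "Vpsi V vstar psi' x = Vpsi V vstar psi x + \<delta> * vstar L x" for x
    unfolding psi' V_def by (rule Vpsi_upd) (use psiL LV V_def in auto)
  have nup: "norm1 V psi' = norm1 V psi + \<delta>"
    unfolding psi' V_def by (rule norm1_upd) (use psiL LV V_def in auto)
  have Hm: "H psi \<subseteq> H psi'"
    unfolding H_def Hpsi_def V_def[symmetric]
  proof (rule Hset_mono)
    fix x
    have "Vpsi V vstar psi x \<le> Vpsi V vstar psi' x"
      using Vup vstar_nonneg[of L x] LV dpos V_def by simp
    thus "Vpsi V vstar psi x / Delta \<le> Vpsi V vstar psi' x / Delta"
      using Dp by (simp add: divide_right_mono)
  qed
  have L'L: "V - H psi' \<subseteq> L" using Hm L_def by blast
  have J1: "psi' U > 0 \<and> U \<subseteq> V \<and> V - H psi' \<subseteq> U" if "psi' U \<noteq> 0" for U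
  proof (cases "U = L")
    case True thus ?thesis using dpos LV L'L psi' by simp
  next
    case False
    hence "psi U \<noteq> 0" using that psi' by simp
    thus ?thesis using I1[of U] False psi' L'L L_def by auto
  qed
  have J2: "U \<subseteq> W \<or> W \<subseteq> U" if "psi' U \<noteq> 0" "psi' W \<noteq> 0" for U W
  proof -
    have a: "psi X \<noteq> 0 \<Longrightarrow> L \<subseteq> X" for X using I1 L_def by blast
    show ?thesis using that psi' I2[of U W] a[of U] a[of W] by (cases "U = L"; cases "W = L") auto
  qed
  have J3: "D psi' (V - H psi') = {}" if "psi' (V - H psi') \<noteq> 0"
  proof (cases "V - H psi' = L")
    case True
    show ?thesis
    proof (rule ccontr)
      assume "D psi' (V - H psi') \<noteq> {}"
      then obtain d where d: "d \<in> D psi' L" using True by auto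
      have "\<delta> + d \<in> D psi L"
      proof -
        have e: "(\<lambda>x. (Vpsi V vstar psi' x + d * vstar L x) / Delta) =
                 (\<lambda>x. (Vpsi V vstar psi x + (\<delta> + d) * vstar L x) / Delta)"
          by (rule ext) (simp add: Vup algebra_simps)
        have c: "consistent Q vars sigma n p (\<lambda>x. (Vpsi V vstar psi' x + d * vstar L x) / Delta)"
          using d unfolding D_def by blast
        have c2: "consistent Q vars sigma n p (\<lambda>x. (Vpsi V vstar psi x + (\<delta> + d) * vstar L x) / Delta)"
          using c unfolding e .
        show ?thesis using d dpos nup c2 unfolding D_def by auto
      qed
      thus False using dmax d unfolding D_def by force
    qed
  next
    case False
    hence "psi (V - H psi') \<noteq> 0" using that psi' by simp
    hence "L \<subseteq> V - H psi'" using I1 L_def by blast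
    thus ?thesis using L'L False by blast
  qed
  show ?thesis unfolding Inv_def using J1 J2 J3 unfolding V_def H_def D_def by blast
qed

lemma Inv_reach:
  assumes "(construct_step Q vars sigma n p vstar Delta)\<^sup>*\<^sup>* (\<lambda>_. 0) psi"
  shows "Inv psi"
  using assms
proof (induction rule: rtranclp_induct)
  case base show ?case by (rule Inv0)
next
  case (step y z) thus ?case using Inv_step by blast
qed

end

theorem lemma4p12:
  fixes Q :: "'r set" and vars :: "'r \<Rightarrow> 'v set" and tuples :: "'r \<Rightarrow> ('v \<rightharpoonup> 'd) set"
    and sigma :: "'r \<Rightarrow> 'v set \<Rightarrow> real" and n p :: nat and Delta :: real
    and vstar :: "'v set \<Rightarrow> 'v \<Rightarrow> real" and psi :: "'v set \<Rightarrow> real"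
  assumes "finite Q"
    and "\<forall>R\<in>Q. finite (vars R)"
    and "inj_on vars Q"
    and "\<forall>R\<in>Q. finite (tuples R) \<and> (\<forall>t\<in>tuples R. dom t = vars R)"
    and "\<forall>R\<in>Q. \<forall>U. U \<subseteq> vars R \<longrightarrow> sigma R U \<ge> 0"
    and "uniformized Q vars tuples sigma"
    and "n = (\<Sum>R\<in>Q. card (tuples R))"
    and "p \<ge> 1"
    and "Delta > 0"
    and "\<forall>U. U \<subseteq> hypV Q vars \<longrightarrow>
           min_frac_vc U (red (ind_edges Q vars U)) (vstar U) \<and> (\<forall>x. x \<notin> U \<longrightarrow> vstar U x = 0)"
    and "construct_output Q vars sigma n p vstar Delta psi"
  shows "\<forall>R\<in>Q. vars R - Hpsi Q vars sigma n p vstar Delta psi \<noteq> {} \<longrightarrow>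
           (\<exists>R'\<in>Q. vars R - Hpsi Q vars sigma n p vstar Delta psi \<subseteq> vars R' \<and>
                    (\<Sum>x\<in>vars R'. Vpsi (hypV Q vars) vstar psi x) \<ge> 1)"
proof (intro ballI impI)
  fix R assume RQ: "R \<in> Q" and ne: "vars R - Hpsi Q vars sigma n p vstar Delta psi \<noteq> {}"
  define V where "V = hypV Q vars"
  define H where "H = Hpsi Q vars sigma n p vstar Delta psi"
  define e where "e = vars R - H"
  have fV: "finite V" unfolding V_def using finV[OF assms(1,2,8,9,10)] .
  have subV: "\<forall>R\<in>Q. vars R \<subseteq> V" unfolding V_def hypV_def by auto
  have I: "Inv Q vars sigma n p Delta vstar psi"
    using Inv_reach[OF assms(1,2,8,9,10)] assms(11) unfolding construct_output_def by blast
  have I1: "\<And>U. psi U \<noteq> 0 \<Longrightarrow> psi U > 0 \<and> U \<subseteq> V \<and> V - H \<subseteq> U"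
    and I2: "\<And>U W. psi U \<noteq> 0 \<Longrightarrow> psi W \<noteq> 0 \<Longrightarrow> U \<subseteq> W \<or> W \<subseteq> U"
    using I unfolding Inv_def[OF assms(1,2,8,9,10)] V_def H_def by blast+
  have "H \<noteq> V" using ne subV RQ unfolding H_def by blast
  hence n1: "norm1 V psi \<ge> 1" using assms(11)
    unfolding construct_output_def loop_cond_def V_def H_def by auto
  define C where "C = {U. psi U \<noteq> 0}"
  have eC: "\<forall>U\<in>C. e \<subseteq> U" using I1 subV RQ unfolding C_def e_def by blast
  obtain R' where R'Q: "R' \<in> Q" and eR': "e \<subseteq> vars R'"
    and mx: "\<forall>U\<in>C. \<forall>R\<in>Q. \<not> (vars R' \<inter> U \<subset> vars R \<inter> U)"
    using select[OF assms(1) fV subV _ _ RQ _ eC] I1 I2 unfolding C_def e_def by blast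
  have finR': "finite (vars R')" using assms(2) R'Q by blast
  have cov: "(\<Sum>x\<in>vars R'. vstar U x) \<ge> 1" if UC: "U \<in> C" for U
  proof -
    have UV: "U \<subseteq> V" using I1 UC unfolding C_def by blast
    have vsU: "min_frac_vc U (red (ind_edges Q vars U)) (vstar U)" "\<forall>x. x \<notin> U \<longrightarrow> vstar U x = 0"
      using assms(10) UV unfolding V_def by blast+
    define f where "f = vars R' \<inter> U"
    have "e \<noteq> {}" using ne unfolding e_def H_def .
    hence fne: "f \<noteq> {}" using eR' eC UC unfolding f_def by blast
    have "f \<in> ind_edges Q vars U" unfolding ind_edges_def f_def using R'Q fne f_def by blast
    moreover have "\<not> (\<exists>g\<in>ind_edges Q vars U. f \<subset> g)"
      using mx UC unfolding ind_edges_def f_def by blast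
    ultimately have "f \<in> red (ind_edges Q vars U)" unfolding red_def by blast
    hence s1: "(\<Sum>x\<in>f. vstar U x) \<ge> 1" using vsU(1) unfolding min_frac_vc_def frac_vc_def by blast
    have "(\<Sum>x\<in>vars R'. vstar U x) = (\<Sum>x\<in>f. vstar U x)"
      by (rule sum.mono_neutral_right) (use finR' vsU(2) in \<open>auto simp: f_def\<close>)
    thus ?thesis using s1 by simp
  qed
  have "(\<Sum>x\<in>vars R'. Vpsi V vstar psi x) = (\<Sum>U\<in>Pow V. psi U * (\<Sum>x\<in>vars R'. vstar U x))"
    unfolding Vpsi_def by (simp add: sum_distrib_left sum.swap[of _ "vars R'"])
  also have "\<dots> \<ge> (\<Sum>U\<in>Pow V. psi U)"
  proof (rule sum_mono)
    fix U assume "U \<in> Pow V"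
    show "psi U \<le> psi U * (\<Sum>x\<in>vars R'. vstar U x)"
    proof (cases "psi U = 0")
      case False
      hence "U \<in> C" "psi U > 0" using I1 unfolding C_def by auto
      thus ?thesis using cov[of U] by (simp add: mult_le_cancel_left1)
    qed simp
  qed
  finally show "\<exists>R'\<in>Q. vars R - Hpsi Q vars sigma n p vstar Delta psi \<subseteq> vars R' \<and>
                    (\<Sum>x\<in>vars R'. Vpsi (hypV Q vars) vstar psi x) \<ge> 1"
    using R'Q eR' n1 unfolding e_def H_def V_def norm1_def by auto
qed

end
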